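(* A non-failed Boolean CSP is closed under the applications of (each of) the rules of the proof system BOOL if and only if it is hyper-arc consistent.
   Context: A Boolean CSP is $\langle \mathcal C; x_1\in D_1,\dots,x_n\in D_n\rangle$ with $D_i\subseteq\{0,1\}$ and $\mathcal C$ a finite set of Boolean constraints, each of one of the forms $u=v$ (relation $\{(0,0),(1,1)\}$), $\neg u=v$ ($\{(0,1),(1,0)\}$), $u\wedge v=w$ ($\{(0,0,0),(0,1,0),(1,0,0),(1,1,1)\}$), $u\vee v=w$ ($\{(0,0,0),(0,1,1),(1,0,1),(1,1,1)\}$) on distinct variables among $x_1,\dots,x_n$; each constraint is always understood as restricted to the current domains, i.e. intersected with the product of the domains of its variables. We write $x=d$ for $x\in\{d\}$. A CSP is failed if some domain is empty. A constraint is solved if it equals the product of the domains of its variables. A CSP $\phi$ is a reformulation of $\psi$ if removing the solved constraints from both yields the same CSP. The proof system BOOL consists of the rules (constraint, premise $\rightarrow$ conclusion; $x,y,z$ schematic): EQU1: $x=y$, $x=1\rightarrow y=1$; EQU2: $x=y$, $y=1\rightarrow x=1$; EQU3: $x=y$, $x=0\rightarrow y=0$; EQU4: $x=y$, $y=0\rightarrow x=0$; NOT1: $\neg x=y$, $x=1\rightarrow y=0$; NOT2: $\neg x=y$, $x=0\rightarrow y=1$; NOT3: $\neg x=y$, $y=1\rightarrow x=0$; NOT4: $\neg x=y$, $y=0\rightarrow x=1$; AND1: $x\wedge y=z$, $x=1,y=1\rightarrow z=1$; AND2: $x\wedge y=z$, $x=1,z=0\rightarrow y=0$; AND3: $x\wedge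 y=z$, $y=1,z=0\rightarrow x=0$; AND4: $x\wedge y=z$, $x=0\rightarrow z=0$; AND5: $x\wedge y=z$, $y=0\rightarrow z=0$; AND6: $x\wedge y=z$, $z=1\rightarrow x=1,y=1$; OR1: $x\vee y=z$, $x=1\rightarrow z=1$; OR2: $x\vee y=z$, $x=0,y=0\rightarrow z=0$; OR3: $x\vee y=z$, $x=0,z=1\rightarrow y=1$; OR4: $x\vee y=z$, $y=0,z=1\rightarrow x=1$; OR5: $x\vee y=z$, $y=1\rightarrow z=1$; OR6: $x\vee y=z$, $z=0\rightarrow x=0,y=0$. On CSPs, such a rule with constraint $c$, premise $X=s$ and conclusion $Y=t$ is the deterministic rule $\dfrac{\langle c;\ X=s,\ \text{other variables of } c \text{ in their domains}\rangle}{\langle \emptyset;\ X=s,\ \text{each } y_j\in Y \text{ with domain } D_{y_j}\cap\{t_j\},\ \text{other variables unchanged}\rangle}$. E.g. AND6 is $\dfrac{\langle x\wedge y=z;\ x\in D_x,y\in D_y,z=1\rangle}{\langle\emptyset;\ x\in D_x\cap\{1\},y\in D_y\cap\{1\},z=1\rangle}$. It can be applied to a CSP $\langle\mathcal C\cup\{c\};\mathcal D\cup\mathcal D_1\rangle$ where $\mathcal D_1$ matches its premise (the constraint $c$ instantiated by distinct variables, variables in $X$ having exactly the domains $\{s_i\}$); the result replaces $c$ and $\mathcal D_1$ by the conclusion's constraints and domain expressions. An application is relevant if its result is not a reformulation of the CSP it was applied to. A CSP is closed under the applications of a rule $R$ if either $R$ cannot be applied to it or no application of $R$ to it is relevant.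 A constraint $C$ is hyper-arc consistent if for every variable of $C$, each value in its domain participates in a solution to $C$ (a tuple of $C$ restricted to the current domains). A CSP is hyper-arc consistent if every constraint of it is. *)

theory Defs
  imports Main
begin

text \<open>Boolean values 0,1 are represented by False,True. A domain is a subset of the
  Boolean values, i.e. a bool set.\<close>

datatype 'v constr =
    CEq 'v 'v
  | CNot 'v 'v
  | CAnd 'v 'v 'v      \<comment> \<open>u and v = w\<close>
  | COr 'v 'v 'v       \<comment> \<open>u or v = w\<close>

fun cvars :: "'v constr \<Rightarrow> 'v list" where
  "cvars (CEq u v) = [u, v]"
| "cvars (CNot u v) = [u, v]"
| "cvars (CAnd u v w) = [u, v, w]"
| "cvars (COr u v w) = [u, v, w]"

fun crel :: "'v constr \<Rightarrow> bool list set" where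
  "crel (CEq _ _) = {[a, b] | a b. b = a}"
| "crel (CNot _ _) = {[a, b] | a b. b = (\<not> a)}"
| "crel (CAnd _ _ _) = {[a, b, c] | a b c. c = (a \<and> b)}"
| "crel (COr _ _ _) = {[a, b, c] | a b c. c = (a \<or> b)}"

definition wf_constr :: "'v constr \<Rightarrow> bool" where
  "wf_constr c \<longleftrightarrow> distinct (cvars c)"

definition prod_doms :: "('v \<Rightarrow> bool set) \<Rightarrow> 'v list \<Rightarrow> bool list set" where
  "prod_doms D xs = {t. list_all2 (\<lambda>x a. a \<in> D x) xs t}"

definition sols :: "('v \<Rightarrow> bool set) \<Rightarrow> 'v constr \<Rightarrow> bool list set" where
  "sols D c = crel c \<inter> prod_doms D (cvars c)"

definition solved :: "('v \<Rightarrow> bool set) \<Rightarrow> 'v constr \<Rightarrow> bool" where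
  "solved D c \<longleftrightarrow> sols D c = prod_doms D (cvars c)"

text \<open>A CSP: a set of constraints together with the domains; its variables are a set V.\<close>
type_synonym 'v csp = "'v constr set \<times> ('v \<Rightarrow> bool set)"

definition failed :: "'v set \<Rightarrow> 'v csp \<Rightarrow> bool" where
  "failed V P \<longleftrightarrow> (\<exists>x\<in>V. snd P x = {})"

definition wf_csp :: "'v set \<Rightarrow> 'v csp \<Rightarrow> bool" where
  "wf_csp V P \<longleftrightarrow> finite V \<and> finite (fst P) \<and>
     (\<forall>c\<in>fst P. wf_constr c \<and> set (cvars c) \<subseteq> V)"

definition reformulation :: "'v set \<Rightarrow> 'v csp \<Rightarrow> 'v csp \<Rightarrow> bool" where
  "reformulation V P Q \<longleftrightarrow>
     {c \<in> fst P. \<not> solved (snd P) c} = {c \<in> fst Q. \<not> solved (snd Q) c} \<and>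
     (\<forall>x\<in>V. snd P x = snd Q x)"

datatype rule =
    EQU1 | EQU2 | EQU3 | EQU4
  | NOT1 | NOT2 | NOT3 | NOT4
  | AND1 | AND2 | AND3 | AND4 | AND5 | AND6
  | OR1 | OR2 | OR3 | OR4 | OR5 | OR6

text \<open>Instantiation of a rule by a constraint: if the constraint has the rule's form,
  returns the premise (list of variable/value pairs X = s) and the conclusion (Y = t).\<close>
fun rule_inst :: "rule \<Rightarrow> 'v constr \<Rightarrow> (('v \<times> bool) list \<times> ('v \<times> bool) list) option" where
  "rule_inst EQU1 (CEq x y) = Some ([(x, True)], [(y, True)])"
| "rule_inst EQU2 (CEq x y) = Some ([(y, True)], [(x, True)])"
| "rule_inst EQU3 (CEq x y) = Some ([(x, False)], [(y, False)])"
| "rule_inst EQU4 (CEq x y) = Some ([(y, False)], [(x, False)])"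
| "rule_inst NOT1 (CNot x y) = Some ([(x, True)], [(y, False)])"
| "rule_inst NOT2 (CNot x y) = Some ([(x, False)], [(y, True)])"
| "rule_inst NOT3 (CNot x y) = Some ([(y, True)], [(x, False)])"
| "rule_inst NOT4 (CNot x y) = Some ([(y, False)], [(x, True)])"
| "rule_inst AND1 (CAnd x y z) = Some ([(x, True), (y, True)], [(z, True)])"
| "rule_inst AND2 (CAnd x y z) = Some ([(x, True), (z, False)], [(y, False)])"
| "rule_inst AND3 (CAnd x y z) = Some ([(y, True), (z, False)], [(x, False)])"
| "rule_inst AND4 (CAnd x y z) = Some ([(x, False)], [(z, False)])"
| "rule_inst AND5 (CAnd x y z) = Some ([(y, False)], [(z, False)])"
| "rule_inst AND6 (CAnd x y z) = Some ([(z, True)], [(x, True), (y, True)])"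
| "rule_inst OR1 (COr x y z) = Some ([(x, True)], [(z, True)])"
| "rule_inst OR2 (COr x y z) = Some ([(x, False), (y, False)], [(z, False)])"
| "rule_inst OR3 (COr x y z) = Some ([(x, False), (z, True)], [(y, True)])"
| "rule_inst OR4 (COr x y z) = Some ([(y, False), (z, True)], [(x, True)])"
| "rule_inst OR5 (COr x y z) = Some ([(y, True)], [(z, True)])"
| "rule_inst OR6 (COr x y z) = Some ([(z, False)], [(x, False), (y, False)])"
| "rule_inst _ _ = None"

definition applicable :: "rule \<Rightarrow> 'v constr \<Rightarrow> 'v csp \<Rightarrow> bool" where
  "applicable R c P \<longleftrightarrow> c \<in> fst P \<and>
     (\<exists>prem concl. rule_inst R c = Some (prem, concl) \<and>
        (\<forall>(x, s) \<in> set prem. snd P x = {s}))"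

definition apply_rule :: "rule \<Rightarrow> 'v constr \<Rightarrow> 'v csp \<Rightarrow> 'v csp" where
  "apply_rule R c P =
     (fst P - {c},
      (\<lambda>y. {a \<in> snd P y. \<forall>(z, t) \<in> set (snd (the (rule_inst R c))). z = y \<longrightarrow> a = t}))"

definition relevant :: "'v set \<Rightarrow> rule \<Rightarrow> 'v constr \<Rightarrow> 'v csp \<Rightarrow> bool" where
  "relevant V R c P \<longleftrightarrow> \<not> reformulation V (apply_rule R c P) P"

definition closed_under :: "'v set \<Rightarrow> rule \<Rightarrow> 'v csp \<Rightarrow> bool" where
  "closed_under V R P \<longleftrightarrow> (\<forall>c. applicable R c P \<longrightarrow> \<not> relevant V R c P)"

definition hac_constr :: "('v \<Rightarrow> bool set) \<Rightarrow> 'v constr \<Rightarrow> bool" where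
  "hac_constr D c \<longleftrightarrow>
     (\<forall>i < length (cvars c). \<forall>a \<in> D (cvars c ! i). \<exists>t \<in> sols D c. t ! i = a)"

definition hac :: "'v csp \<Rightarrow> bool" where
  "hac P \<longleftrightarrow> (\<forall>c \<in> fst P. hac_constr (snd P) c)"

end

theory Submission imports Defs begin

lemma bool_set_single: "(S = {b}) \<longleftrightarrow> (b \<in> S \<and> (\<not> b) \<notin> S)"
  by (cases b) (auto, (metis (full_types))+)

lemma ball_bool: "(\<forall>a\<in>S. P a) \<longleftrightarrow> ((True \<in> S \<longrightarrow> P True) \<and> (False \<in> S \<longrightarrow> P False))"
  by (metis (full_types))
lemma bex_bool: "(\<exists>a\<in>S. P a) \<longleftrightarrow> ((True \<in> S \<and> P True) \<or> (False \<in> S \<and> P False))"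
  by (metis (full_types))
lemma nonempty_bool: "(S \<noteq> {}) \<longleftrightarrow> (True \<in> S \<or> False \<in> S)"
  by (metis (full_types) all_not_in_conv)

lemma rule_all: "(\<forall>R. Q R) \<longleftrightarrow> (Q EQU1 \<and> Q EQU2 \<and> Q EQU3 \<and> Q EQU4 \<and> Q NOT1 \<and> Q NOT2 \<and> Q NOT3 \<and> Q NOT4 \<and>
   Q AND1 \<and> Q AND2 \<and> Q AND3 \<and> Q AND4 \<and> Q AND5 \<and> Q AND6 \<and> Q OR1 \<and> Q OR2 \<and> Q OR3 \<and> Q OR4 \<and> Q OR5 \<and> Q OR6)"
  apply (rule iffI)
   apply (intro conjI; erule spec)
  apply (rule allI)
  subgoal for R by (cases R) simp_all
  done

lemma prod_doms2: "prod_doms D [x,y] = {[a,b] | a b. a \<in> D x \<and> b \<in> D y}"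
  unfolding prod_doms_def by (auto simp: list_all2_Cons1)
lemma prod_doms3: "prod_doms D [x,y,z] = {[a,b,c] | a b c. a \<in> D x \<and> b \<in> D y \<and> c \<in> D z}"
  unfolding prod_doms_def by (auto simp: list_all2_Cons1)

lemma solved_iff: "solved D c \<longleftrightarrow> (\<forall>t\<in>prod_doms D (cvars c). t \<in> crel c)"
  unfolding solved_def sols_def by blast
lemma bex_sols: "(\<exists>t\<in>sols D c. Q t) \<longleftrightarrow> (\<exists>t\<in>prod_doms D (cvars c). t \<in> crel c \<and> Q t)"
  unfolding sols_def by blast

lemma solved_and: "solved D (CAnd x y z) \<longleftrightarrow> (\<forall>a\<in>D x. \<forall>b\<in>D y. \<forall>c\<in>D z. c = (a\<and>b))"
  unfolding solved_iff cvars.simps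
proof
  assume h: "\<forall>t\<in>prod_doms D [x,y,z]. t \<in> crel (CAnd x y z)"
  show "\<forall>a\<in>D x. \<forall>b\<in>D y. \<forall>c\<in>D z. c = (a\<and>b)"
  proof (intro ballI)
    fix a b c assume "a \<in> D x" "b \<in> D y" "c \<in> D z"
    then have "[a,b,c] \<in> prod_doms D [x,y,z]" by (simp add: prod_doms3)
    with h show "c = (a\<and>b)" by auto
  qed
next
  assume "\<forall>a\<in>D x. \<forall>b\<in>D y. \<forall>c\<in>D z. c = (a\<and>b)"
  then show "\<forall>t\<in>prod_doms D [x,y,z]. t \<in> crel (CAnd x y z)" by (auto simp: prod_doms3)
qed
lemma solved_or: "solved D (COr x y z) \<longleftrightarrow> (\<forall>a\<in>D x. \<forall>b\<in>D y. \<forall>c\<in>D z. c = (a\<or>b))"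
  unfolding solved_iff cvars.simps
proof
  assume h: "\<forall>t\<in>prod_doms D [x,y,z]. t \<in> crel (COr x y z)"
  show "\<forall>a\<in>D x. \<forall>b\<in>D y. \<forall>c\<in>D z. c = (a\<or>b)"
  proof (intro ballI)
    fix a b c assume "a \<in> D x" "b \<in> D y" "c \<in> D z"
    then have "[a,b,c] \<in> prod_doms D [x,y,z]" by (simp add: prod_doms3)
    with h show "c = (a\<or>b)" by auto
  qed
next
  assume "\<forall>a\<in>D x. \<forall>b\<in>D y. \<forall>c\<in>D z. c = (a\<or>b)"
  then show "\<forall>t\<in>prod_doms D [x,y,z]. t \<in> crel (COr x y z)" by (auto simp: prod_doms3)
qed
lemma solved_eq: "solved D (CEq x y) \<longleftrightarrow> (\<forall>a\<in>D x. \<forall>b\<in>D y. b = a)"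
  unfolding solved_iff cvars.simps
proof
  assume h: "\<forall>t\<in>prod_doms D [x,y]. t \<in> crel (CEq x y)"
  show "\<forall>a\<in>D x. \<forall>b\<in>D y. b = a"
  proof (intro ballI)
    fix a b assume "a \<in> D x" "b \<in> D y"
    then have "[a,b] \<in> prod_doms D [x,y]" by (simp add: prod_doms2)
    with h show "b = a" by auto
  qed
next
  assume "\<forall>a\<in>D x. \<forall>b\<in>D y. b = a"
  then show "\<forall>t\<in>prod_doms D [x,y]. t \<in> crel (CEq x y)" by (auto simp: prod_doms2)
qed
lemma solved_not: "solved D (CNot x y) \<longleftrightarrow> (\<forall>a\<in>D x. \<forall>b\<in>D y. b = (\<not>a))"
  unfolding solved_iff cvars.simps
proof
  assume h: "\<forall>t\<in>prod_doms D [x,y]. t \<in> crel (CNot x y)"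
  show "\<forall>a\<in>D x. \<forall>b\<in>D y. b = (\<not>a)"
  proof (intro ballI)
    fix a b assume "a \<in> D x" "b \<in> D y"
    then have "[a,b] \<in> prod_doms D [x,y]" by (simp add: prod_doms2)
    with h show "b = (\<not>a)" by auto
  qed
next
  assume "\<forall>a\<in>D x. \<forall>b\<in>D y. b = (\<not>a)"
  then show "\<forall>t\<in>prod_doms D [x,y]. t \<in> crel (CNot x y)" by (auto simp: prod_doms2)
qed

lemma sols_and: "(\<exists>t\<in>sols D (CAnd x y z). Q t) \<longleftrightarrow> (\<exists>a\<in>D x. \<exists>b\<in>D y. (a\<and>b) \<in> D z \<and> Q [a,b,a\<and>b])"
  unfolding bex_sols by (simp add: prod_doms3) blast
lemma sols_or: "(\<exists>t\<in>sols D (COr x y z). Q t) \<longleftrightarrow> (\<exists>a\<in>D x. \<exists>b\<in>D y. (a\<or>b) \<in> D z \<and> Q [a,b,a\<or>b])"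
  unfolding bex_sols by (simp add: prod_doms3) blast
lemma sols_eq: "(\<exists>t\<in>sols D (CEq x y). Q t) \<longleftrightarrow> (\<exists>a\<in>D x. a \<in> D y \<and> Q [a,a])"
  unfolding bex_sols by (simp add: prod_doms2) blast
lemma sols_not: "(\<exists>t\<in>sols D (CNot x y). Q t) \<longleftrightarrow> (\<exists>a\<in>D x. (\<not>a) \<in> D y \<and> Q [a,\<not>a])"
  unfolding bex_sols by (simp add: prod_doms2) blast

definition okc :: "rule \<Rightarrow> 'v constr \<Rightarrow> ('v \<Rightarrow> bool set) \<Rightarrow> bool" where
  "okc R c D \<longleftrightarrow> (\<forall>prem concl. rule_inst R c = Some (prem, concl) \<longrightarrow>
      (\<forall>(x, s) \<in> set prem. D x = {s}) \<longrightarrow>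
      (\<forall>(y, t) \<in> set concl. \<forall>a\<in>D y. a = t) \<and> solved D c)"

lemmas bsimps = bool_set_single ball_bool bex_bool nonempty_bool

lemma and_case:
  assumes "D x \<noteq> {}" "D y \<noteq> {}" "D z \<noteq> {}"
  shows "(\<forall>R. okc R (CAnd x y z) D) \<longleftrightarrow> hac_constr D (CAnd x y z)"
  using assms
  unfolding rule_all okc_def hac_constr_def
  apply (simp add: less_Suc_eq all_conj_distrib solved_and sols_and)
  apply (simp add: bsimps)
  apply (cases "True \<in> D x"; cases "False \<in> D x"; cases "True \<in> D y"; cases "False \<in> D y"; cases "True \<in> D z"; cases "False \<in> D z")
  apply simp_all
  done
lemma or_case:
  assumes "D x \<noteq> {}" "D y \<noteq> {}" "D z \<noteq> {}"
  shows "(\<forall>R. okc R (COr x y z) D) \<longleftrightarrow> hac_constr D (COr x y z)"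
  using assms
  unfolding rule_all okc_def hac_constr_def
  apply (simp add: less_Suc_eq all_conj_distrib solved_or sols_or)
  apply (simp add: bsimps)
  apply (cases "True \<in> D x"; cases "False \<in> D x"; cases "True \<in> D y"; cases "False \<in> D y"; cases "True \<in> D z"; cases "False \<in> D z")
  apply simp_all
  done
lemma eq_case:
  assumes "D x \<noteq> {}" "D y \<noteq> {}"
  shows "(\<forall>R. okc R (CEq x y) D) \<longleftrightarrow> hac_constr D (CEq x y)"
  using assms
  unfolding rule_all okc_def hac_constr_def
  apply (simp add: less_Suc_eq all_conj_distrib solved_eq sols_eq)
  apply (simp add: bsimps)
  apply (cases "True \<in> D x"; cases "False \<in> D x"; cases "True \<in> D y"; cases "False \<in> D y")
  apply simp_all
  done
lemma not_case:
  assumes "D x \<noteq> {}" "D y \<noteq> {}"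
  shows "(\<forall>R. okc R (CNot x y) D) \<longleftrightarrow> hac_constr D (CNot x y)"
  using assms
  unfolding rule_all okc_def hac_constr_def
  apply (simp add: less_Suc_eq all_conj_distrib solved_not sols_not)
  apply (simp add: bsimps)
  apply (cases "True \<in> D x"; cases "False \<in> D x"; cases "True \<in> D y"; cases "False \<in> D y")
  apply simp_all
  done

lemma concl_vars: "rule_inst R c = Some (p, q) \<Longrightarrow> (y, t) \<in> set q \<Longrightarrow> y \<in> set (cvars c)"
  by (cases R; cases c; auto)

lemma local_iff:
  assumes c: "c \<in> fst P" and cv: "set (cvars c) \<subseteq> V"
  shows "(applicable R c P \<longrightarrow> \<not> relevant V R c P) \<longleftrightarrow> okc R c (snd P)"
proof (cases "rule_inst R c")
  case None
  then show ?thesis by (simp add: applicable_def okc_def)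
next
  case (Some pq)
  obtain p q where Sq: "rule_inst R c = Some (p, q)" using Some by (cases pq) auto
  define D where "D = snd P"
  define D' where "D' = (\<lambda>y. {a \<in> D y. \<forall>zt \<in> set q. fst zt = y \<longrightarrow> a = snd zt})"
  have app: "apply_rule R c P = (fst P - {c}, D')"
    unfolding apply_rule_def D'_def D_def Sq by (simp add: split_def)
  have qV: "\<forall>zt\<in>set q. fst zt \<in> V"
  proof
    fix zt assume "zt \<in> set q"
    then have "(fst zt, snd zt) \<in> set q" by simp
    then show "fst zt \<in> V" using concl_vars[OF Sq] cv by blast
  qed
  have dom: "(\<forall>x\<in>V. D' x = D x) \<longleftrightarrow> (\<forall>zt\<in>set q. \<forall>a\<in>D (fst zt). a = snd zt)"
  proof
    assume h: "\<forall>x\<in>V. D' x = D x"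
    show "\<forall>zt\<in>set q. \<forall>a\<in>D (fst zt). a = snd zt"
    proof (intro ballI)
      fix zt a assume zt: "zt \<in> set q" and a: "a \<in> D (fst zt)"
      have "fst zt \<in> V" using qV zt by blast
      then have "a \<in> D' (fst zt)" using h a by metis
      then show "a = snd zt" using zt unfolding D'_def by blast
    qed
  next
    assume h: "\<forall>zt\<in>set q. \<forall>a\<in>D (fst zt). a = snd zt"
    show "\<forall>x\<in>V. D' x = D x" unfolding D'_def using h by auto
  qed
  have dom2: "D' = D" if h: "\<forall>zt\<in>set q. \<forall>a\<in>D (fst zt). a = snd zt"
    unfolding D'_def using h by auto
  have ref: "reformulation V (apply_rule R c P) P \<longleftrightarrow>
      (\<forall>zt\<in>set q. \<forall>a\<in>D (fst zt). a = snd zt) \<and> solved D c"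
  proof
    assume r: "reformulation V (apply_rule R c P) P"
    then have d: "\<forall>x\<in>V. D' x = D x" unfolding reformulation_def app D_def by simp
    then have q: "\<forall>zt\<in>set q. \<forall>a\<in>D (fst zt). a = snd zt" using dom by blast
    have "{c' \<in> fst P - {c}. \<not> solved D c'} = {c' \<in> fst P. \<not> solved D c'}"
      using r dom2[OF q] unfolding reformulation_def app D_def by simp
    then have "solved D c" using c by blast
    with q show "(\<forall>zt\<in>set q. \<forall>a\<in>D (fst zt). a = snd zt) \<and> solved D c" by blast
  next
    assume h: "(\<forall>zt\<in>set q. \<forall>a\<in>D (fst zt). a = snd zt) \<and> solved D c"
    then have "D' = D" using dom2 by blast
    moreover have "{c' \<in> fst P - {c}. \<not> solved D c'} = {c' \<in> fst P. \<not> solved D c'}"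
      using h by blast
    ultimately show "reformulation V (apply_rule R c P) P"
      unfolding reformulation_def app D_def by simp
  qed
  have A: "applicable R c P \<longleftrightarrow> (\<forall>xs\<in>set p. D (fst xs) = {snd xs})"
    unfolding applicable_def D_def using c Sq by (simp add: split_def)
  have O: "okc R c (snd P) \<longleftrightarrow> ((\<forall>xs\<in>set p. D (fst xs) = {snd xs}) \<longrightarrow>
      (\<forall>zt\<in>set q. \<forall>a\<in>D (fst zt). a = snd zt) \<and> solved D c)"
    unfolding okc_def D_def using Sq by (simp add: split_def)
  show ?thesis unfolding relevant_def ref A O by blast
qed

lemma case_all:
  assumes "\<forall>x\<in>set (cvars c). D x \<noteq> {}"
  shows "(\<forall>R. okc R c D) \<longleftrightarrow> hac_constr D c"
proof (cases c)
  case (CEq x y) then show ?thesis using assms eq_case[of D x y] by simp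
next
  case (CNot x y) then show ?thesis using assms not_case[of D x y] by simp
next
  case (CAnd x y z) then show ?thesis using assms and_case[of D x y z] by simp
next
  case (COr x y z) then show ?thesis using assms or_case[of D x y z] by simp
qed

theorem theorem4:
  fixes V :: "'v set" and P :: "'v csp"
  assumes "wf_csp V P"
    and "\<not> failed V P"
  shows "(\<forall>R. closed_under V R P) \<longleftrightarrow> hac P"
proof -
  have cv: "\<And>c. c \<in> fst P \<Longrightarrow> set (cvars c) \<subseteq> V" using assms(1) unfolding wf_csp_def by blast
  have ne: "\<And>x. x \<in> V \<Longrightarrow> snd P x \<noteq> {}" using assms(2) unfolding failed_def by blast
  have "(\<forall>R. closed_under V R P) \<longleftrightarrow> (\<forall>c\<in>fst P. \<forall>R. okc R c (snd P))"
  proof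
    assume h: "\<forall>R. closed_under V R P"
    show "\<forall>c\<in>fst P. \<forall>R. okc R c (snd P)"
    proof (intro ballI allI)
      fix c R assume c: "c \<in> fst P"
      have "applicable R c P \<longrightarrow> \<not> relevant V R c P" using h unfolding closed_under_def by blast
      then show "okc R c (snd P)" using local_iff[OF c cv[OF c]] by blast
    qed
  next
    assume h: "\<forall>c\<in>fst P. \<forall>R. okc R c (snd P)"
    show "\<forall>R. closed_under V R P"
      unfolding closed_under_def
    proof (intro allI impI)
      fix R c assume a: "applicable R c P"
      then have c: "c \<in> fst P" unfolding applicable_def by blast
      show "\<not> relevant V R c P" using local_iff[OF c cv[OF c]] h c a by blast
    qed
  qed
  also have "\<dots> \<longleftrightarrow> (\<forall>c\<in>fst P. hac_constr (snd P) c)"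
  proof (rule ball_cong[OF refl])
    fix c assume c: "c \<in> fst P"
    have "\<forall>x\<in>set (cvars c). snd P x \<noteq> {}" using cv[OF c] ne by blast
    then show "(\<forall>R. okc R c (snd P)) = hac_constr (snd P) c" by (rule case_all)
  qed
  finally show ?thesis unfolding hac_def .
qed

end
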